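(* Let the branching factor satisfy $b>1$, let $\ell^*$ be the peak of the single-peaked sequence $\{\lambda_i\}$ and $\gamma>1$ a constant with $\sum_{j\ge i}\lambda_j\le\gamma\lambda_i$ for all $i\ge\ell^*+2$. Then for all $i\le\ell^*$, $\lambda_{i+1}\,x_i\le(\gamma+1)(h-i)$.
   Context: Galton–Watson branching process on an infinite $d$-ary tree (root at level $0$) with offspring distribution $D=\{c_j\}_{j=0}^d$, branching factor $b=\sum_j jc_j$; each non-root node independently holds an answer with probability $1/n$. Let $t(x)=\sum_jc_jx^j(1-\frac1n)^j$, $\phi_0=1$, $\phi_i=t(\phi_{i-1})$, $\lambda_i=\phi_{i-1}-\phi_i$. For $b>1$ the sequence $\{\lambda_i\}$ is single-peaked: there is a level $\ell^*$ with $\lambda_{i-1}\le\lambda_i$ for $i\le\ell^*$ and $\lambda_j>\lambda_{j+1}$ for $j\ge\ell^*$, and there is a constant $\gamma>1$ (independent of $n$) with $\sum_{j\ge i}\lambda_j\le\gamma\lambda_i$ for all $i\ge\ell^*+2$. For a level $h$, define $x_h=0$ and for $i\le h-1$, $x_i=\max_{i+1\le j\le h}\{x_j+\frac{j-i}{\lambda_{i+1}}\sum_{\ell=i+1}^h\lambda_\ell\}$ (the direct referral rewards of the DR mechanism). *)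

theory Defs
  imports "HOL-Analysis.Analysis"
begin

text \<open>Offspring generating function with answer-thinning:
  t(x) = sum_{j=0}^d c_j x^j (1 - 1/n)^j.\<close>
definition tgen :: "(nat \<Rightarrow> real) \<Rightarrow> nat \<Rightarrow> real \<Rightarrow> real \<Rightarrow> real" where
  "tgen c d n x = (\<Sum>j\<le>d. c j * x ^ j * (1 - 1 / n) ^ j)"

fun phi :: "(nat \<Rightarrow> real) \<Rightarrow> nat \<Rightarrow> real \<Rightarrow> nat \<Rightarrow> real" where
  "phi c d n 0 = 1"
| "phi c d n (Suc i) = tgen c d n (phi c d n i)"

text \<open>lambda_i = phi_(i-1) - phi_i for i >= 1 (lambda_0 is set to 0; it is never used).\<close>
definition lam :: "(nat \<Rightarrow> real) \<Rightarrow> nat \<Rightarrow> real \<Rightarrow> nat \<Rightarrow> real" where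
  "lam c d n i = (if i = 0 then 0 else phi c d n (i - 1) - phi c d n i)"

text \<open>Direct referral rewards for a level h, for a given sequence L (to be instantiated by lambda):
  x_h = 0 and for i <= h-1,
  x_i = max_{i+1 <= j <= h} (x_j + (j - i)/L_(i+1) * sum_{l=i+1}^h L_l).\<close>
function DRx :: "(nat \<Rightarrow> real) \<Rightarrow> nat \<Rightarrow> nat \<Rightarrow> real" where
  "DRx L h i = (if i < h then
      Max ((\<lambda>j. DRx L h j + real (j - i) / L (Suc i) * (\<Sum>l = Suc i..h. L l)) ` {Suc i..h})
    else 0)"
  by pat_completeness auto
termination
  by (relation "Wellfounded.measure (\<lambda>(L, h, i). h - i)") auto

end

theory Submission
  imports Defs
begin

declare DRx.simps[simp del]

lemma DR_bound:
  fixes L :: "nat \<Rightarrow> real"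
  assumes key: "\<And>k m. k < h \<Longrightarrow> 0 \<le> m \<Longrightarrow> m \<le> 1 \<Longrightarrow>
      (\<forall>j. k \<le> j \<and> j < h \<and> Suc j \<le> lstar \<longrightarrow> m \<le> L (Suc j)) \<Longrightarrow>
      m * (\<Sum>l=Suc k..h. L l) / L (Suc k) \<le> G"
  shows "h - k = d \<Longrightarrow> k \<le> h \<Longrightarrow> 0 \<le> m \<Longrightarrow> m \<le> 1 \<Longrightarrow>
      (\<forall>j. k \<le> j \<and> j < h \<and> Suc j \<le> lstar \<longrightarrow> m \<le> L (Suc j)) \<Longrightarrow>
      m * DRx L h k \<le> G * real (h - k)"
proof (induction d arbitrary: k rule: less_induct)
  case (less d)
  show ?case
  proof (cases "k < h")
    case False
    then show ?thesis using DRx.simps[of L h k] by simp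
  next
    case True
    let ?f = "\<lambda>j. DRx L h j + real (j - k) / L (Suc k) * (\<Sum>l = Suc k..h. L l)"
    have fin: "finite (?f ` {Suc k..h})" and ne: "?f ` {Suc k..h} \<noteq> {}" using True by auto
    from Max_in[OF fin ne] obtain j where j: "j \<in> {Suc k..h}" "Max (?f ` {Suc k..h}) = ?f j"
      by auto
    have eq: "DRx L h k = ?f j" using DRx.simps[of L h k] True j by simp
    have IH: "m * DRx L h j \<le> G * real (h - j)"
      using less.IH[of "h - j" j] less.prems j by auto
    have K: "m * (\<Sum>l=Suc k..h. L l) / L (Suc k) \<le> G"
      using key[of k m] True less.prems by auto
    have "m * DRx L h k = m * DRx L h j + real (j - k) * (m * (\<Sum>l=Suc k..h. L l) / L (Suc k))"
      unfolding eq by (simp add: algebra_simps)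
    also have "\<dots> \<le> G * real (h - j) + real (j - k) * G"
      using IH K by (intro add_mono mult_left_mono) auto
    also have "\<dots> = G * real (h - k)" using j by (simp add: algebra_simps of_nat_diff)
    finally show ?thesis .
  qed
qed

lemma tgen_props:
  fixes n :: real
  assumes c_nonneg: "\<And>j. j \<le> d \<Longrightarrow> c j \<ge> 0"
    and c_sum: "(\<Sum>j\<le>d. c j) = 1" and n_pos: "n \<ge> 1"
    and xy: "0 \<le> x" "x \<le> y" "y \<le> 1"
  shows "0 \<le> tgen c d n x" "tgen c d n x \<le> tgen c d n y" "tgen c d n y \<le> 1"
proof -
  have q: "0 \<le> 1 - 1 / n" "1 - 1 / n \<le> 1" using n_pos by auto
  show "0 \<le> tgen c d n x" unfolding tgen_def
    using c_nonneg q xy by (intro sum_nonneg) auto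
  show "tgen c d n x \<le> tgen c d n y" unfolding tgen_def
    using c_nonneg q xy by (intro sum_mono mult_right_mono mult_left_mono power_mono) auto
  have "tgen c d n y \<le> (\<Sum>j\<le>d. c j)" unfolding tgen_def
  proof (rule sum_mono)
    fix j assume "j \<in> {..d}"
    have "y ^ j * (1 - 1 / n) ^ j \<le> 1 * 1"
      using q xy by (intro mult_mono power_le_one) auto
    then show "c j * y ^ j * (1 - 1 / n) ^ j \<le> c j"
      using c_nonneg[of j] \<open>j \<in> {..d}\<close> mult_left_mono[of _ 1 "c j"] by (auto simp: mult.assoc)
  qed
  then show "tgen c d n y \<le> 1" using c_sum by simp
qed

lemma phi_props:
  fixes n :: real
  assumes c_nonneg: "\<And>j. j \<le> d \<Longrightarrow> c j \<ge> 0"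
    and c_sum: "(\<Sum>j\<le>d. c j) = 1" and n_pos: "n \<ge> 1"
  shows "0 \<le> phi c d n (Suc i) \<and> phi c d n (Suc i) \<le> phi c d n i \<and> phi c d n i \<le> 1"
proof (induction i)
  case 0
  then show ?case using tgen_props[OF assms, of 1 1] by simp
next
  case (Suc i)
  then show ?case using tgen_props[OF assms, of "phi c d n (Suc i)" "phi c d n i"] by simp
qed

theorem proposition5p4:
  fixes c :: "nat \<Rightarrow> real" and d :: nat and n :: nat
    and lstar h :: nat and \<gamma> :: real
  assumes c_nonneg: "\<And>j. j \<le> d \<Longrightarrow> c j \<ge> 0"
    and c_sum: "(\<Sum>j\<le>d. c j) = 1"
    and n_pos: "n \<ge> 1"
    and b_gt1: "(\<Sum>j\<le>d. real j * c j) > 1"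
    and lstar_pos: "lstar \<ge> 1"
    and incr: "\<And>i. 2 \<le> i \<Longrightarrow> i \<le> lstar \<Longrightarrow> lam c d n (i - 1) \<le> lam c d n i"
    and decr: "\<And>j. j \<ge> lstar \<Longrightarrow> lam c d n j > lam c d n (Suc j)"
    and gamma_gt1: "\<gamma> > 1"
    and gamma_tail: "\<And>i. i \<ge> lstar + 2 \<Longrightarrow> (\<Sum>k. lam c d n (i + k)) \<le> \<gamma> * lam c d n i"
  shows "\<forall>i. i \<le> lstar \<and> i \<le> h \<longrightarrow>
           lam c d n (Suc i) * DRx (lam c d n) h i \<le> (\<gamma> + 1) * real (h - i)"
proof -
  let ?L = "lam c d n"
  let ?p = "phi c d n"
  have P: "\<And>i. 0 \<le> ?p (Suc i) \<and> ?p (Suc i) \<le> ?p i \<and> ?p i \<le> 1"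
    using phi_props[OF c_nonneg c_sum, of "real n"] n_pos by auto
  have p0: "\<And>i. 0 \<le> ?p i" using P by (metis not0_implies_Suc phi.simps(1) zero_le_one)
  have Lnn: "0 \<le> ?L i" for i
    using P[of "i - 1"] by (cases i) (auto simp: lam_def)
  have L1: "?L i \<le> 1" for i
    using P[of "i - 1"] p0[of i] by (cases i) (auto simp: lam_def)
  have tele: "\<And>k. k \<le> m \<Longrightarrow> (\<Sum>l=Suc k..m. ?L l) = ?p k - ?p m" for m
  proof (induction m)
    case 0 then show ?case by simp
  next
    case (Suc m)
    show ?case
    proof (cases "k = Suc m")
      case True then show ?thesis by simp
    next
      case False
      then have "k \<le> m" using Suc.prems by simp
      then show ?thesis using Suc.IH by (simp add: lam_def)
    qed
  qed
  have tele2: "(\<Sum>t<N. ?L (Suc b + t)) = ?p b - ?p (b + N)" for b N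
  proof (induction N)
    case 0 then show ?case by simp
  next
    case (Suc N) then show ?case by (simp add: lam_def)
  qed
  have summ: "summable (\<lambda>t. ?L (Suc b + t))" for b
  proof (rule summableI_nonneg_bounded[where x=1])
    show "0 \<le> ?L (Suc b + t)" for t using Lnn .
    show "(\<Sum>t<N. ?L (Suc b + t)) \<le> 1" for N unfolding tele2 using P[of b] p0[of "b+N"] by simp
  qed
  have mono: "?L a \<le> ?L b" if "1 \<le> a" "a \<le> b" "b \<le> lstar" for a b
    using that
  proof (induction b)
    case 0 then show ?case by simp
  next
    case (Suc b)
    show ?case
    proof (cases "a = Suc b")
      case True then show ?thesis by simp
    next
      case False
      then have "?L a \<le> ?L b" using Suc by simp
      moreover have "?L b \<le> ?L (Suc b)" using incr[of "Suc b"] Suc.prems False by simp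
      ultimately show ?thesis by simp
    qed
  qed
  have key: "m * (\<Sum>l=Suc k..h. ?L l) / ?L (Suc k) \<le> \<gamma> + 1"
    if kh: "k < h" and m0: "0 \<le> m" and m1: "m \<le> 1"
      and cond: "\<forall>j. k \<le> j \<and> j < h \<and> Suc j \<le> lstar \<longrightarrow> m \<le> ?L (Suc j)" for k m
  proof -
    let ?S = "\<Sum>l=Suc k..h. ?L l"
    have S0: "0 \<le> ?S" using Lnn by (simp add: sum_nonneg)
    have S1: "?S \<le> 1" using tele[of k h] kh P[of k] p0[of h] by simp
    show ?thesis
    proof (cases "?L (Suc k) = 0")
      case True then show ?thesis using gamma_gt1 by simp
    next
      case Lpos: False
      then have Lp: "?L (Suc k) > 0" using Lnn[of "Suc k"] by simp
      show ?thesis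
      proof (cases "Suc k \<le> lstar")
        case True
        then have "m \<le> ?L (Suc k)" using cond kh by auto
        then have "m * ?S \<le> ?L (Suc k) * ?S" using S0 by (rule mult_right_mono)
        then have "m * ?S / ?L (Suc k) \<le> ?S" using Lp by (simp add: divide_le_eq mult.commute)
        then show ?thesis using S1 gamma_gt1 by simp
      next
        case False
        have split: "?S = ?L (Suc k) + (\<Sum>l=Suc (Suc k)..h. ?L l)"
          using kh by (simp add: sum.atLeast_Suc_atMost)
        have "(\<Sum>l=Suc (Suc k)..h. ?L l) = (\<Sum>t<h - Suc k. ?L (Suc (Suc k) + t))"
          using tele[of "Suc k" h] tele2[of "Suc k" "h - Suc k"] kh by simp
        also have "\<dots> \<le> (\<Sum>t. ?L (Suc (Suc k) + t))"
          using summ[of "Suc k"] Lnn by (intro sum_le_suminf) auto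
        also have "\<dots> \<le> \<gamma> * ?L (Suc (Suc k))"
          using gamma_tail[of "Suc (Suc k)"] False by simp
        also have "\<dots> \<le> \<gamma> * ?L (Suc k)"
          using decr[of "Suc k"] False gamma_gt1 by simp
        finally have "?S \<le> (\<gamma> + 1) * ?L (Suc k)" using split by (simp add: algebra_simps)
        then have "?S / ?L (Suc k) \<le> \<gamma> + 1" using Lp by (simp add: divide_le_eq)
        moreover have "m * ?S / ?L (Suc k) \<le> ?S / ?L (Suc k)"
        proof -
          have "m * ?S \<le> ?S" using m1 m0 S0 by (simp add: mult_left_le_one_le)
          then show ?thesis using Lp by (simp add: divide_right_mono)
        qed
        ultimately show ?thesis by simp
      qed
    qed
  qed
  show ?thesis
  proof (intro allI impI)
    fix i assume i: "i \<le> lstar \<and> i \<le> h"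
    have cond: "\<forall>j. i \<le> j \<and> j < h \<and> Suc j \<le> lstar \<longrightarrow> ?L (Suc i) \<le> ?L (Suc j)"
      using mono by auto
    have DB: "\<And>k d m. h - k = d \<Longrightarrow> k \<le> h \<Longrightarrow> 0 \<le> m \<Longrightarrow> m \<le> 1 \<Longrightarrow>
      (\<forall>j. k \<le> j \<and> j < h \<and> Suc j \<le> lstar \<longrightarrow> m \<le> ?L (Suc j)) \<Longrightarrow>
      m * DRx ?L h k \<le> (\<gamma> + 1) * real (h - k)"
      by (rule DR_bound[where L="?L" and h=h and lstar=lstar and G="\<gamma>+1", OF key])
    show "?L (Suc i) * DRx ?L h i \<le> (\<gamma> + 1) * real (h - i)"
      by (rule DB[OF refl]) (use i cond Lnn L1 in auto)
  qed
qed

end
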